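(* The symmetry locus $\mathcal S\subset\mathcal M_2\cong\mathbf C^2$ is an algebraic curve of degree three and genus zero in the coordinates $(\sigma_1,\sigma_2)$. It is given parametrically by $$\sigma_1=4k-2+k^{-1},\qquad \sigma_2=4k^2-4k+5-2k^{-1},\qquad k\in\mathbf C\setminus\{0\}.$$ This curve is non-singular except for a cusp at the point $\langle z\mapsto1/z^2\rangle$, which corresponds to $k=-1/2$, $(\sigma_1,\sigma_2)=(-6,12)$.
   Context: $\mathrm{Rat}_2$ is the space of holomorphic degree-$2$ maps of the Riemann sphere; each $f$ has three fixed points counted with multiplicity, with multipliers $\mu_1,\mu_2,\mu_3$ and elementary symmetric functions $\sigma_1,\sigma_2,\sigma_3$. $\mathcal M_2$, the set of Möbius conjugacy classes $\langle f\rangle$, is identified with $\mathbf C^2$ via $(\sigma_1,\sigma_2)$. An automorphism of $f$ is a Möbius transformation $g\neq\mathrm{id}$ with $g\circ f\circ g^{-1}=f$. The symmetry locus $\mathcal S$ is the set of $\langle f\rangle\in\mathcal M_2$ such that $f$ has a non-trivial automorphism; equivalently the set of classes of maps $z\mapsto k(z+z^{-1})$, $k\neq0$. *)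

theory Defs
  imports "HOL-Analysis.Analysis" "HOL-Computational_Algebra.Computational_Algebra"
begin

text \<open>The Riemann sphere is modelled as complex option, None being the point at infinity.\<close>

type_synonym sphere = "complex option"

definition Rat :: "nat \<Rightarrow> (complex poly \<times> complex poly) set" where
  "Rat d = {(P, Q). coprime P Q \<and> max (degree P) (degree Q) = d}"

fun rat_eval :: "complex poly \<times> complex poly \<Rightarrow> sphere \<Rightarrow> sphere" where
  "rat_eval (P, Q) (Some z) =
     (if poly Q z = 0 then None else Some (poly P z / poly Q z))"
| "rat_eval (P, Q) None =
     (if degree Q < degree P then None else Some (coeff P (degree Q) / lead_coeff Q))"

definition moebius :: "(sphere \<Rightarrow> sphere) set" where
  "moebius = rat_eval ` Rat 1"

definition is_automorphism :: "(sphere \<Rightarrow> sphere) \<Rightarrow> (sphere \<Rightarrow> sphere) \<Rightarrow> bool" where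
  "is_automorphism g f \<longleftrightarrow> g \<in> moebius \<and> g \<noteq> id \<and> g \<circ> f \<circ> inv g = f"

text \<open>Finite fixed points of P/Q are the roots of P - z Q, with multiplicity the root order;
  the multiplicity of the fixed point at infinity is (d+1) - degree (P - z Q), i.e. the
  multiplicity of [1:0] as a root of the homogeneous fixed point form of degree d+1.\<close>

definition fixpoly :: "complex poly \<times> complex poly \<Rightarrow> complex poly" where
  "fixpoly f = fst f - [:0, 1:] * snd f"

definition mult_fin :: "complex poly \<times> complex poly \<Rightarrow> complex \<Rightarrow> complex" where
  "mult_fin f z = deriv (\<lambda>w. poly (fst f) w / poly (snd f) w) z"

text \<open>Multiplier at infinity: derivative at 0 of w |-> 1 / f(1/w) (the map in the chart at infinity).\<close>
definition mult_inf :: "complex poly \<times> complex poly \<Rightarrow> complex" where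
  "mult_inf f = deriv (\<lambda>w. if w = 0 then 0 else poly (snd f) (1 / w) / poly (fst f) (1 / w)) 0"

definition fp_multipliers :: "complex poly \<times> complex poly \<Rightarrow> complex multiset" where
  "fp_multipliers f =
     (\<Sum>z\<in>{z. poly (fixpoly f) z = 0}. replicate_mset (order z (fixpoly f)) (mult_fin f z))
     + replicate_mset (max (degree (fst f)) (degree (snd f)) + 1 - degree (fixpoly f)) (mult_inf f)"

text \<open>k-th elementary symmetric function of a multiset (via prod (X + m) = sum e_k X^(n-k)).\<close>
definition esym :: "nat \<Rightarrow> complex multiset \<Rightarrow> complex" where
  "esym k M = coeff (\<Prod>m\<in>#M. [:m, 1:]) (size M - k)"

definition sigma1 :: "complex poly \<times> complex poly \<Rightarrow> complex" where
  "sigma1 f = esym 1 (fp_multipliers f)"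

definition sigma2 :: "complex poly \<times> complex poly \<Rightarrow> complex" where
  "sigma2 f = esym 2 (fp_multipliers f)"

text \<open>The symmetry locus, as a subset of M_2 = C^2 via (sigma1, sigma2).\<close>
definition symmetry_locus :: "(complex \<times> complex) set" where
  "symmetry_locus =
     {(sigma1 f, sigma2 f) | f. f \<in> Rat 2 \<and> (\<exists>g. is_automorphism g (rat_eval f))}"

text \<open>Polynomials in two variables are coefficient functions c i j (coefficient of x^i y^j)
  with finite support.\<close>

definition is_bipoly :: "(nat \<Rightarrow> nat \<Rightarrow> complex) \<Rightarrow> bool" where
  "is_bipoly c \<longleftrightarrow> finite {(i, j). c i j \<noteq> 0}"

definition bpoly_eval :: "(nat \<Rightarrow> nat \<Rightarrow> complex) \<Rightarrow> complex \<Rightarrow> complex \<Rightarrow> complex" where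
  "bpoly_eval c x y = (\<Sum>(i, j)\<in>{(i, j). c i j \<noteq> 0}. c i j * x ^ i * y ^ j)"

definition bdeg :: "(nat \<Rightarrow> nat \<Rightarrow> complex) \<Rightarrow> nat" where
  "bdeg c = Max {i + j | i j. c i j \<noteq> 0}"

definition zero_set :: "(nat \<Rightarrow> nat \<Rightarrow> complex) \<Rightarrow> (complex \<times> complex) set" where
  "zero_set c = {(x, y). bpoly_eval c x y = 0}"

definition singular_pt :: "(nat \<Rightarrow> nat \<Rightarrow> complex) \<Rightarrow> complex \<times> complex \<Rightarrow> bool" where
  "singular_pt c p \<longleftrightarrow>
     bpoly_eval c (fst p) (snd p) = 0 \<and>
     deriv (\<lambda>x. bpoly_eval c x (snd p)) (fst p) = 0 \<and>
     deriv (\<lambda>y. bpoly_eval c (fst p) y) (snd p) = 0"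

definition dir_deriv :: "nat \<Rightarrow> (nat \<Rightarrow> nat \<Rightarrow> complex) \<Rightarrow> complex \<times> complex \<Rightarrow> complex \<times> complex \<Rightarrow> complex" where
  "dir_deriv n c p v = (deriv ^^ n) (\<lambda>t. bpoly_eval c (fst p + t * fst v) (snd p + t * snd v)) 0"

text \<open>(Ordinary) cusp: a singular point whose tangent cone (the quadratic part) is a single
  double line, spanned by v, and where the cubic term along v does not vanish
  (analytically equivalent to y^2 = x^3).\<close>
definition is_cusp :: "(nat \<Rightarrow> nat \<Rightarrow> complex) \<Rightarrow> complex \<times> complex \<Rightarrow> bool" where
  "is_cusp c p \<longleftrightarrow> singular_pt c p \<and>
     (\<exists>v. v \<noteq> (0, 0) \<and> dir_deriv 2 c p v = 0 \<and> dir_deriv 3 c p v \<noteq> 0 \<and>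
          (\<forall>w. dir_deriv 2 c p w = 0 \<longrightarrow> (\<exists>t. w = (t * fst v, t * snd v))))"

end

theory Submission
  imports Defs
begin



lemma deg2_eq:
  fixes p :: "complex poly"
  assumes "degree p \<le> 2"
  shows "p = [:coeff p 0, coeff p 1, coeff p 2:]"
proof (rule poly_eqI)
  fix n show "coeff p n = coeff [:coeff p 0, coeff p 1, coeff p 2:] n"
    using assms coeff_eq_0[of p n]
    by (cases n; cases "n - 1"; cases "n - 2") (auto simp: coeff_pCons numeral_2_eq_2 split: nat.splits)
qed

lemma common_root_false:
  fixes P Q :: "complex poly"
  assumes "coprime P Q" "poly P z = 0" "poly Q z = 0"
  shows False
proof -
  have 1: "[:-z,1:] dvd P" using assms(2) by (simp add: poly_eq_0_iff_dvd)
  have 2: "[:-z,1:] dvd Q" using assms(3) by (simp add: poly_eq_0_iff_dvd)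
  have "is_unit [:-z,1:]" using coprime_common_divisor[OF assms(1) 1 2] .
  then show False by (simp only: is_unit_pCons_iff) simp
qed

lemma mset_roots:
  fixes F :: "complex poly"
  assumes "F \<noteq> 0"
  shows "(\<Sum>z\<in>{z. poly F z = 0}. replicate_mset (order z F) (h z)) = image_mset h (proots F)"
proof (rule multiset_eqI)
  fix y
  have fin: "finite {z. poly F z = 0}" using assms poly_roots_finite by blast
  have "count (\<Sum>z\<in>{z. poly F z = 0}. replicate_mset (order z F) (h z)) y
      = (\<Sum>z\<in>{z. poly F z = 0}. if y = h z then order z F else 0)"
    by (simp add: count_sum)
  also have "\<dots> = (\<Sum>z\<in>h -` {y} \<inter> {z. poly F z = 0}. order z F)"
    using fin by (simp add: sum.inter_filter[symmetric]) (rule sum.cong, auto)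
  also have "\<dots> = count (image_mset h (proots F)) y"
    using assms by (simp add: count_image_mset)
  finally show "count (\<Sum>z\<in>{z. poly F z = 0}. replicate_mset (order z F) (h z)) y = count (image_mset h (proots F)) y" .
qed

lemma prod3: "[:u,1:]*([:v,1:]*[:w,1:]) = [:u * v * w, u * v + u * w + v * w, u + v + w, 1:]"
  for u v w :: complex
  by (simp add: algebra_simps)

lemma esym3:
  shows "esym 1 {#u,v,w#} = u+v+w" "esym 2 {#u,v,w#} = u * v + u * w + v * w"
  by (simp_all add: esym_def prod3 numeral_eq_Suc algebra_simps)



lemma mult_fin_eq:
  fixes p0 p1 p2 q0 q1 q2 z :: complex
  assumes "q0 + q1 * z + q2 * z^2 \<noteq> 0"
  shows "mult_fin ([:p0,p1,p2:],[:q0,q1,q2:]) z =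
    ((p1 + 2 * p2 * z) * (q0 + q1 * z + q2 * z^2) - (p0 + p1 * z + p2 * z^2) * (q1 + 2 * q2 * z)) / (q0 + q1 * z + q2 * z^2)^2"
proof -
  have "((\<lambda>w. poly [:p0,p1,p2:] w / poly [:q0,q1,q2:] w) has_field_derivative
    ((p1 + 2 * p2 * z) * (q0 + q1 * z + q2 * z^2) - (p0 + p1 * z + p2 * z^2) * (q1 + 2 * q2 * z)) / (q0 + q1 * z + q2 * z^2)^2) (at z)"
    using assms
    by (simp, auto intro!: derivative_eq_intros simp: power2_eq_square algebra_simps)
  then show ?thesis unfolding mult_fin_def by (simp add: DERIV_imp_deriv)
qed

lemma divcancel: "c \<noteq> 0 \<Longrightarrow> (a / c) / (b / c) = a / (b::complex)"
  by (simp add: divide_divide_eq_left divide_divide_eq_right)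

lemma mult_inf_eq:
  fixes p0 p1 p2 q0 q1 :: complex
  assumes "p2 \<noteq> 0"
  shows "mult_inf ([:p0,p1,p2:],[:q0,q1,0:]) = q1 / p2"
proof -
  have eq: "(\<lambda>w. if w = 0 then 0 else poly [:q0,q1,0:] (1 / w) / poly [:p0,p1,p2:] (1 / w))
     = (\<lambda>w. (q0 * w^2 + q1 * w) / (p0 * w^2 + p1 * w + p2))"
  proof
    fix w :: complex
    show "(if w = 0 then 0 else poly [:q0,q1,0:] (1 / w) / poly [:p0,p1,p2:] (1 / w))
       = (q0 * w^2 + q1 * w) / (p0 * w^2 + p1 * w + p2)"
    proof (cases "w = 0")
      case True then show ?thesis by simp
    next
      case False
      have a: "poly [:q0,q1,0:] (1 / w) = (q0 * w^2 + q1 * w) / w^2"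
        using False by (simp add: field_simps power2_eq_square)
      have b: "poly [:p0,p1,p2:] (1 / w) = (p0 * w^2 + p1 * w + p2) / w^2"
        using False by (simp add: field_simps power2_eq_square)
      have c: "(q0 * w^2 + q1 * w) / w^2 / ((p0 * w^2 + p1 * w + p2) / w^2)
          = (q0 * w^2 + q1 * w) / (p0 * w^2 + p1 * w + p2)"
        using False by (intro divcancel) simp
      show ?thesis using False by (simp only: a b c if_False)
    qed
  qed
  have "((\<lambda>w. (q0 * w^2 + q1 * w) / (p0 * w^2 + p1 * w + p2)) has_field_derivative q1 / p2) (at 0)"
    using assms by (auto intro!: derivative_eq_intros simp: power2_eq_square field_simps)
  then show ?thesis unfolding mult_inf_def fst_conv snd_conv eq by (rule DERIV_imp_deriv)
qed


definition "Dc p0 p1 p2 q0 q1 q2 = ((p2 * q0 - p0 * q2)^2 - (p2 * q1 - p1 * q2) * (p1 * q0 - p0 * q1) :: complex)"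
definition "N1c p0 p1 p2 q0 q1 q2 = (2 * p2^2 * q0^2 - p1 * q0 * q1^2 + 4 * p1 * q0^2 * q2 - 2 * p1^2 * q0 * q2 - p1^2 * p2 * q1 + p1^3 * q2 + p0 * q1^3 - 4 * p0 * q0 * q1 * q2 - 2 * p0 * p2 * q1^2 + 4 * p0 * p2 * q0 * q2 + 4 * p0 * p2^2 * q1 + 4 * p0 * p1 * q1 * q2 - 4 * p0 * p1 * p2 * q2 - 6 * p0^2 * q2^2 :: complex)"
definition "N2c p0 p1 p2 q0 q1 q2 = (4 * q0^3 * q2 - q0^2 * q1^2 + 2 * p2 * q0^2 * q1 - 4 * p1 * q0^2 * q2 - p1 * p2 * q0 * q1 + 2 * p1 * p2^2 * q0 - p1^2 * q1^2 + 5 * p1^2 * q0 * q2 - p1^2 * p2^2 - 2 * p1^3 * q2 - 2 * p0 * q1^3 + 10 * p0 * q0 * q1 * q2 + 5 * p0 * p2 * q1^2 - 4 * p0 * p2 * q0 * q2 - 4 * p0 * p2^2 * q1 + 4 * p0 * p2^3 - 7 * p0 * p1 * q1 * q2 + 10 * p0 * p1 * p2 * q2 + 12 * p0^2 * q2^2 :: complex)"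

definition "Af p1 p2 q1 q2 z = (p1 + 2 * p2 * z - z * (q1 + 2 * q2 * z) :: complex)"
definition "Bf q0 q1 q2 z = (q0 + q1 * z + q2 * z^2 :: complex)"

lemma id_n3:
  fixes z1 z2 z3 q0 q1 c :: complex
  assumes "q2 = -c" "p0 = -c * z1 * z2 * z3" "p1 = q0 + c * (z1 * z2 + z1 * z3 + z2 * z3)" "p2 = q1 - c * (z1 + z2 + z3)"
  shows "Dc p0 p1 p2 q0 q1 q2 = q2 * Bf q0 q1 q2 z1 * Bf q0 q1 q2 z2 * Bf q0 q1 q2 z3"
    "N1c p0 p1 p2 q0 q1 q2 = q2 * (Af p1 p2 q1 q2 z1 * Bf q0 q1 q2 z2 * Bf q0 q1 q2 z3 + Af p1 p2 q1 q2 z2 * Bf q0 q1 q2 z1 * Bf q0 q1 q2 z3 + Af p1 p2 q1 q2 z3 * Bf q0 q1 q2 z1 * Bf q0 q1 q2 z2)"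
    "N2c p0 p1 p2 q0 q1 q2 = q2 * (Af p1 p2 q1 q2 z1 * Af p1 p2 q1 q2 z2 * Bf q0 q1 q2 z3 + Af p1 p2 q1 q2 z1 * Af p1 p2 q1 q2 z3 * Bf q0 q1 q2 z2 + Af p1 p2 q1 q2 z2 * Af p1 p2 q1 q2 z3 * Bf q0 q1 q2 z1)"
  unfolding Dc_def N1c_def N2c_def Af_def Bf_def using assms by algebra+

lemma id_n2:
  fixes z1 z2 q0 q1 c :: complex
  assumes "q2 = 0" "p0 = c * z1 * z2" "p1 = q0 - c * (z1 + z2)" "p2 = q1 + c"
  shows "Dc p0 p1 p2 q0 q1 q2 = c * p2 * Bf q0 q1 q2 z1 * Bf q0 q1 q2 z2"
    "N1c p0 p1 p2 q0 q1 q2 = c * (p2 * Af p1 p2 q1 q2 z1 * Bf q0 q1 q2 z2 + p2 * Af p1 p2 q1 q2 z2 * Bf q0 q1 q2 z1 + q1 * Bf q0 q1 q2 z1 * Bf q0 q1 q2 z2)"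
    "N2c p0 p1 p2 q0 q1 q2 = c * (p2 * Af p1 p2 q1 q2 z1 * Af p1 p2 q1 q2 z2 + q1 * Af p1 p2 q1 q2 z1 * Bf q0 q1 q2 z2 + q1 * Af p1 p2 q1 q2 z2 * Bf q0 q1 q2 z1)"
  unfolding Dc_def N1c_def N2c_def Af_def Bf_def using assms by algebra+

lemma id_n1:
  fixes z1 q0 q1 c :: complex
  assumes "q2 = 0" "p0 = - c * z1" "p1 = q0 + c" "p2 = q1"
  shows "Dc p0 p1 p2 q0 q1 q2 = - c * q1^2 * Bf q0 q1 q2 z1"
    "N1c p0 p1 p2 q0 q1 q2 = - c * q1^2 * (Af p1 p2 q1 q2 z1 + 2 * Bf q0 q1 q2 z1)"
    "N2c p0 p1 p2 q0 q1 q2 = - c * q1^2 * (2 * Af p1 p2 q1 q2 z1 + Bf q0 q1 q2 z1)"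
  unfolding Dc_def N1c_def N2c_def Af_def Bf_def using assms by algebra+

lemma id_n0:
  fixes p0 q0 q1 :: complex
  assumes "q2 = 0" "p1 = q0" "p2 = q1"
  shows "Dc p0 p1 p2 q0 q1 q2 = q1^3 * p0"
    "N1c p0 p1 p2 q0 q1 q2 = 3 * (q1^3 * p0)"
    "N2c p0 p1 p2 q0 q1 q2 = 3 * (q1^3 * p0)"
  unfolding Dc_def N1c_def N2c_def Af_def Bf_def using assms by algebra+


lemma prod2: "[:u,1:]*[:v,1:] = [:u * v, u + v, 1:]" for u v :: complex
  by (simp add: algebra_simps)

lemma mset3: assumes "size M = 3" shows "\<exists>a b c. M = {#a, b, c#}"
proof -
  from assms obtain a M1 where 1: "M = {#a#} + M1" "size M1 = 2" by (metis numeral_3_eq_3 size_mset_SucE numeral_2_eq_2)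
  from 1(2) obtain b M2 where 2: "M1 = {#b#} + M2" "size M2 = 1" by (metis numeral_2_eq_2 size_mset_SucE One_nat_def)
  from 2(2) obtain c where 3: "M2 = {#c#}" by (metis size_1_singleton_mset)
  show ?thesis using 1 2 3 by auto
qed

lemma mset2: assumes "size M = 2" shows "\<exists>a b. M = {#a, b#}"
proof -
  from assms obtain a M1 where 1: "M = {#a#} + M1" "size M1 = 1" by (metis numeral_2_eq_2 size_mset_SucE One_nat_def)
  from 1(2) obtain b where 2: "M1 = {#b#}" by (metis size_1_singleton_mset)
  show ?thesis using 1 2 by auto
qed

lemma sigma_formula:
  assumes R: "(P, Q) \<in> Rat 2"
  defines "p0 \<equiv> coeff P 0" and "p1 \<equiv> coeff P 1" and "p2 \<equiv> coeff P 2"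
    and "q0 \<equiv> coeff Q 0" and "q1 \<equiv> coeff Q 1" and "q2 \<equiv> coeff Q 2"
  shows "Dc p0 p1 p2 q0 q1 q2 \<noteq> 0 \<and>
         sigma1 (P, Q) = N1c p0 p1 p2 q0 q1 q2 / Dc p0 p1 p2 q0 q1 q2 \<and>
         sigma2 (P, Q) = N2c p0 p1 p2 q0 q1 q2 / Dc p0 p1 p2 q0 q1 q2"
proof -
  have cop: "coprime P Q" and md: "max (degree P) (degree Q) = 2" using R by (auto simp: Rat_def)
  have Peq: "P = [:p0, p1, p2:]" unfolding p0_def p1_def p2_def using md by (intro deg2_eq) simp
  have Qeq: "Q = [:q0, q1, q2:]" unfolding q0_def q1_def q2_def using md by (intro deg2_eq) simp
  define F where "F = fixpoly (P, Q)"
  have Feq: "F = [:p0, p1 - q0, p2 - q1, - q2:]"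
    unfolding F_def fixpoly_def by (simp add: Peq Qeq)
  have polyF: "poly F z = poly P z - z * poly Q z" for z
    unfolding F_def fixpoly_def by simp
  have Qnz: "Bf q0 q1 q2 z \<noteq> 0" if "poly F z = 0" for z
  proof
    assume "Bf q0 q1 q2 z = 0"
    then have "poly Q z = 0" by (simp add: Qeq Bf_def algebra_simps power2_eq_square)
    moreover then have "poly P z = 0" using that polyF[of z] by simp
    ultimately show False using cop common_root_false by blast
  qed
  have mu: "mult_fin (P, Q) z = Af p1 p2 q1 q2 z / Bf q0 q1 q2 z" if "poly F z = 0" for z
  proof -
    have B: "q0 + q1 * z + q2 * z^2 \<noteq> 0" using Qnz[OF that] by (simp add: Bf_def)
    have Pz: "p0 + p1 * z + p2 * z^2 = z * (q0 + q1 * z + q2 * z^2)"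
      using that polyF[of z] by (simp add: Peq Qeq algebra_simps power2_eq_square)
    have e: "(p1 + 2 * p2 * z) * (q0 + q1 * z + q2 * z^2) - z * (q0 + q1 * z + q2 * z^2) * (q1 + 2 * q2 * z)
        = Af p1 p2 q1 q2 z * (q0 + q1 * z + q2 * z^2)" by (simp add: Af_def algebra_simps)
    show ?thesis unfolding Peq Qeq mult_fin_eq[OF B] Pz e using B
      by (simp add: Bf_def power2_eq_square)
  qed
  have Fnz: "F \<noteq> 0"
  proof
    assume F0: "F = 0"
    then have c: "p0 = 0" "p1 = q0" "p2 = q1" "q2 = 0" using Feq by auto
    have "q1 \<noteq> 0"
    proof
      assume "q1 = 0"
      then have "degree P \<le> 1" "degree Q \<le> 1" using c by (simp_all add: Peq Qeq)
      then show False using md by simp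
    qed
    define z where "z = - q0 / q1"
    have "poly Q z = 0" using \<open>q1 \<noteq> 0\<close> c by (simp add: Qeq z_def field_simps)
    moreover have "poly P z = 0" using calculation polyF[of z] F0 by simp
    ultimately show False using cop common_root_false by blast
  qed
  have fpm: "fp_multipliers (P, Q) = image_mset (\<lambda>z. Af p1 p2 q1 q2 z / Bf q0 q1 q2 z) (proots F)
      + replicate_mset (3 - degree F) (mult_inf (P, Q))"
  proof -
    have "fp_multipliers (P, Q) = image_mset (mult_fin (P, Q)) (proots F)
      + replicate_mset (3 - degree F) (mult_inf (P, Q))"
      unfolding fp_multipliers_def F_def[symmetric] using md mset_roots[OF Fnz] by simp
    also have "image_mset (mult_fin (P, Q)) (proots F) = image_mset (\<lambda>z. Af p1 p2 q1 q2 z / Bf q0 q1 q2 z) (proots F)"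
      by (rule image_mset_cong) (use Fnz mu in auto)
    finally show ?thesis .
  qed
  have dec: "smult (lead_coeff F) (\<Prod>x\<in>#proots F. [:-x, 1:]) = F"
    by (rule complex_poly_decompose_multiset)
  have sz: "size (proots F) = degree F" by (rule size_proots_complex)
  have rootsF: "poly F z = 0" if "z \<in># proots F" for z using that Fnz by simp
  have s1: "sigma1 (P, Q) = esym 1 (fp_multipliers (P, Q))" by (simp add: sigma1_def)
  have s2: "sigma2 (P, Q) = esym 2 (fp_multipliers (P, Q))" by (simp add: sigma2_def)
  let ?A = "Af p1 p2 q1 q2" and ?B = "Bf q0 q1 q2"
  show ?thesis
  proof (cases "q2 = 0")
    case False
    have degF: "degree F = 3" "lead_coeff F = - q2" using False by (simp_all add: Feq)
    then obtain z1 z2 z3 where pr: "proots F = {#z1, z2, z3#}" using sz mset3 by metis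
    have "F = smult (- q2) [:(-z1) * (-z2) * (-z3), (-z1) * (-z2) + (-z1) * (-z3) + (-z2) * (-z3), (-z1) + (-z2) + (-z3), 1:]"
    proof -
      have "F = smult (- q2) ([:-z1,1:]*([:-z2,1:]*[:-z3,1:]))" using dec degF pr by (simp add: mult_ac)
      then show ?thesis by (simp only: prod3)
    qed
    then have c0: "coeff F 0 = - q2 * ((-z1) * (-z2) * (-z3))"
      and c1: "coeff F 1 = - q2 * ((-z1) * (-z2) + (-z1) * (-z3) + (-z2) * (-z3))"
      and c2: "coeff F 2 = - q2 * ((-z1) + (-z2) + (-z3))" by (simp_all add: numeral_2_eq_2)
    have e0: "p0 = - (- q2) * z1 * z2 * z3" using c0 by (simp add: Feq)
    have e1: "p1 = q0 + (- q2) * (z1 * z2 + z1 * z3 + z2 * z3)" using c1 by (simp add: Feq algebra_simps)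
    have e2: "p2 = q1 - (- q2) * (z1 + z2 + z3)" using c2 by (simp add: Feq numeral_2_eq_2 algebra_simps)
    note ids = id_n3[of q2 "- q2" p0 z1 z2 z3 p1 q0 p2 q1, OF _ e0 e1 e2, simplified]
    have B1: "?B z1 \<noteq> 0" and B2: "?B z2 \<noteq> 0" and B3: "?B z3 \<noteq> 0"
      using Qnz rootsF pr by auto
    have fp: "fp_multipliers (P, Q) = {#?A z1 / ?B z1, ?A z2 / ?B z2, ?A z3 / ?B z3#}"
      using fpm pr degF by simp
    show ?thesis unfolding s1 s2 fp esym3 ids using False B1 B2 B3
      by (simp add: field_simps)
  next
    case True
    have "degree Q \<le> 1" using True by (simp add: Qeq)
    then have "degree P = 2" using md by linarith
    then have p2nz: "p2 \<noteq> 0"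
    proof -
      assume dP: "degree P = 2"
      then have "P \<noteq> 0" by auto
      then have "coeff P (degree P) \<noteq> 0" by simp
      then show ?thesis using dP by (simp add: p2_def)
    qed
    have mi: "mult_inf (P, Q) = q1 / p2" unfolding Peq Qeq True using mult_inf_eq[OF p2nz] by simp
    show ?thesis
    proof (cases "p2 = q1")
      case False
      have degF: "degree F = 2" "lead_coeff F = p2 - q1" using False True by (simp_all add: Feq)
      then obtain z1 z2 where pr: "proots F = {#z1, z2#}" using sz mset2 by metis
      have "F = smult (p2 - q1) [:(-z1) * (-z2), (-z1) + (-z2), 1:]"
      proof -
        have "F = smult (p2 - q1) ([:-z1,1:]*[:-z2,1:])" using dec degF pr by (simp add: mult_ac)
        then show ?thesis by (simp only: prod2)
      qed
      then have c0: "coeff F 0 = (p2 - q1) * ((-z1) * (-z2))"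
        and c1: "coeff F 1 = (p2 - q1) * ((-z1) + (-z2))" by simp_all
      have e0: "p0 = (p2 - q1) * z1 * z2" using c0 by (simp add: Feq)
      have e1: "p1 = q0 - (p2 - q1) * (z1 + z2)" using c1 by (simp add: Feq algebra_simps)
      have e2: "p2 = q1 + (p2 - q1)" by simp
      note ids = id_n2[OF True e0 e1 e2]
      have B1: "?B z1 \<noteq> 0" and B2: "?B z2 \<noteq> 0"
        using Qnz rootsF pr by auto
      have fp: "fp_multipliers (P, Q) = {#?A z1 / ?B z1, ?A z2 / ?B z2, q1 / p2#}"
        using fpm pr degF mi by simp
      have cnz: "p2 - q1 \<noteq> 0" using False by simp
      show ?thesis unfolding s1 s2 fp esym3 ids using cnz p2nz B1 B2
        by (simp add: field_simps)
    next
      case p2q1: True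
      show ?thesis
      proof (cases "p1 = q0")
        case False
        have degF: "degree F = 1" "lead_coeff F = p1 - q0" using False True p2q1 by (simp_all add: Feq)
        then obtain z1 where pr: "proots F = {#z1#}" using sz by (metis One_nat_def size_1_singleton_mset)
        have "F = smult (p1 - q0) [:-z1, 1:]"
          using dec degF pr by simp
        then have c0: "coeff F 0 = (p1 - q0) * (-z1)" by simp
        have e0: "p0 = - (p1 - q0) * z1" using c0 by (simp add: Feq algebra_simps)
        have e1: "p1 = q0 + (p1 - q0)" by simp
        note ids = id_n1[OF True e0 e1 p2q1]
        have B1: "?B z1 \<noteq> 0" using Qnz rootsF pr by auto
        have fp: "fp_multipliers (P, Q) = {#?A z1 / ?B z1, 1, 1#}"
          using fpm pr degF mi p2q1 p2nz by (simp add: numeral_2_eq_2)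
        have cnz: "p1 - q0 \<noteq> 0" using False by simp
        have q1nz: "q1 \<noteq> 0" using p2q1 p2nz by simp
        show ?thesis unfolding s1 s2 fp esym3 ids using cnz q1nz B1
          by (simp add: field_simps)
      next
        case p1q0: True
        have degF: "degree F = 0" using True p2q1 p1q0 by (simp add: Feq)
        have pr: "proots F = {#}" using sz degF by simp
        have p0nz: "p0 \<noteq> 0" using Fnz True p2q1 p1q0 by (simp add: Feq)
        note ids = id_n0[OF True p1q0 p2q1]
        have fp: "fp_multipliers (P, Q) = {#1, 1, 1#}"
          using fpm pr degF mi p2q1 p2nz by (simp add: numeral_3_eq_3)
        have q1nz: "q1 \<noteq> 0" using p2q1 p2nz by simp
        show ?thesis unfolding s1 s2 fp esym3 ids using p0nz q1nz
          by simp
      qed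
    qed
  qed
qed


definition "Ph c0 c1 c2 x y = (c0 * y^2 + c1 * x * y + c2 * x^2 :: complex)"
definition "Hc p0 p1 p2 q0 q1 q2 a b c d x y =
  (a * Ph p0 p1 p2 x y + b * Ph q0 q1 q2 x y) * Ph q0 q1 q2 (a * x + b * y) (c * x + d * y)
  - (c * Ph p0 p1 p2 x y + d * Ph q0 q1 q2 x y) * Ph p0 p1 p2 (a * x + b * y) (c * x + d * y)"

lemma deg1_eq:
  fixes p :: "complex poly"
  assumes "degree p \<le> 1"
  shows "p = [:coeff p 0, coeff p 1:]"
proof (rule poly_eqI)
  fix n show "coeff p n = coeff [:coeff p 0, coeff p 1:] n"
    using assms coeff_eq_0[of p n]
    by (cases n; cases "n - 1") (auto simp: coeff_pCons split: nat.splits)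
qed

lemma moeb_inj:
  fixes a b c d :: complex
  assumes det: "a * d - b * c \<noteq> 0"
  shows "inj (rat_eval ([:b, a:], [:d, c:]))"
proof (rule injI)
  fix x y assume eq: "rat_eval ([:b, a:], [:d, c:]) x = rat_eval ([:b, a:], [:d, c:]) y"
  have c0d: "c = 0 \<Longrightarrow> d \<noteq> 0" and c0a: "c = 0 \<Longrightarrow> a \<noteq> 0" using det by auto
  have gN0: "rat_eval ([:b, a:], [:d, c:]) None = None" if "c = 0"
    using that c0a[OF that] by simp
  have gN1: "rat_eval ([:b, a:], [:d, c:]) None = Some (a / c)" if "c \<noteq> 0"
    using that by (cases "a = 0") simp_all
  have gS0: "rat_eval ([:b, a:], [:d, c:]) (Some z) = None" if "d + z * c = 0" for z
    using that by simp
  have gS1: "rat_eval ([:b, a:], [:d, c:]) (Some z) = Some ((b + z * a) / (d + z * c))" if "d + z * c \<noteq> 0" for z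
    using that by simp
  have noteqN: "a / c \<noteq> (b + z * a) / (d + z * c)" if "c \<noteq> 0" "d + z * c \<noteq> 0" for z
  proof
    assume "a / c = (b + z * a) / (d + z * c)"
    then have "a * (d + z * c) = c * (b + z * a)" using that by (simp add: field_simps)
    then have "a * d - b * c = 0" by (simp add: algebra_simps)
    then show False using det by simp
  qed
  show "x = y"
  proof (cases x)
    case None
    show ?thesis
    proof (cases y)
      case (Some w)
      show ?thesis
      proof (cases "c = 0")
        case True
        then have "d + w * c \<noteq> 0" using c0d by simp
        then show ?thesis using eq None Some gN0[OF True] gS1 by simp
      next
        case False
        show ?thesis
        proof (cases "d + w * c = 0")
          case True then show ?thesis using eq None Some gN1[OF False] gS0 by simp
        next
          case F2: False then show ?thesis using eq None Some gN1[OF False] gS1[OF F2] noteqN[OF False F2] by simp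
        qed
      qed
    qed (use None in simp)
  next
    case (Some z)
    show ?thesis
    proof (cases y)
      case None
      show ?thesis
      proof (cases "c = 0")
        case True
        then have "d + z * c \<noteq> 0" using c0d by simp
        then show ?thesis using eq None Some gN0[OF True] gS1 by simp
      next
        case False
        show ?thesis
        proof (cases "d + z * c = 0")
          case True then show ?thesis using eq None Some gN1[OF False] gS0 by simp
        next
          case F2: False then show ?thesis using eq None Some gN1[OF False] gS1[OF F2] noteqN[OF False F2] by simp
        qed
      qed
    next
      case (Some w)
      note zw = \<open>x = Some z\<close> Some
      show ?thesis
      proof (cases "d + z * c = 0"; cases "d + w * c = 0")
        assume a1: "d + z * c = 0" and a2: "d + w * c = 0"
        then have "c \<noteq> 0" using c0d by auto
        moreover have "(z - w) * c = 0" using a1 a2 by (metis add_diff_cancel_left' diff_self left_diff_distrib')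
        ultimately show ?thesis using zw by simp
      next
        assume a1: "d + z * c = 0" and a2: "d + w * c \<noteq> 0"
        then show ?thesis using eq zw gS0[OF a1] gS1[OF a2] by simp
      next
        assume a1: "d + z * c \<noteq> 0" and a2: "d + w * c = 0"
        then show ?thesis using eq zw gS1[OF a1] gS0[OF a2] by simp
      next
        assume a1: "d + z * c \<noteq> 0" and a2: "d + w * c \<noteq> 0"
        then have "(b + z * a) / (d + z * c) = (b + w * a) / (d + w * c)" using eq zw gS1 by simp
        then have "(b + z * a) * (d + w * c) = (b + w * a) * (d + z * c)" using a1 a2 by (simp add: field_simps)
        then have "(z - w) * (a * d - b * c) = 0" by (simp add: algebra_simps)
        then show ?thesis using det zw by simp
      qed
    qed
  qed
qed



lemma Hc_hom1: "Hc p0 p1 p2 q0 q1 q2 a b c d (t * y) y = y^4 * Hc p0 p1 p2 q0 q1 q2 a b c d t 1"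
  unfolding Hc_def Ph_def power_one mult_1_right mult_1_left by (simp add: algebra_simps power2_eq_square power4_eq_xxxx)

lemma Hc_hom0: "Hc p0 p1 p2 q0 q1 q2 a b c d x 0 = x^4 * Hc p0 p1 p2 q0 q1 q2 a b c d 1 0"
  unfolding Hc_def Ph_def by (simp add: power2_eq_square power4_eq_xxxx algebra_simps)

lemma cont_zero:
  fixes h :: "complex \<Rightarrow> complex"
  assumes "continuous_on UNIV h" "\<And>y. y \<noteq> 0 \<Longrightarrow> h y = 0"
  shows "h 0 = 0"
proof -
  have "(h \<longlongrightarrow> h 0) (at 0)" using assms(1) by (simp add: continuous_on_def)
  moreover have "(h \<longlongrightarrow> 0) (at 0)"
  proof (rule tendsto_eventually)
    show "eventually (\<lambda>y. h y = 0) (at 0)" using assms(2) by (auto simp: eventually_at_filter)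
  qed
  ultimately show ?thesis using tendsto_unique[OF at_neq_bot] by blast
qed

lemma Hc_all:
  assumes "\<And>z. Hc p0 p1 p2 q0 q1 q2 a b c d z 1 = 0"
  shows "Hc p0 p1 p2 q0 q1 q2 a b c d x y = 0"
proof -
  have nz: "Hc p0 p1 p2 q0 q1 q2 a b c d x y = 0" if "y \<noteq> 0" for x y
  proof -
    have "Hc p0 p1 p2 q0 q1 q2 a b c d x y = Hc p0 p1 p2 q0 q1 q2 a b c d ((x / y) * y) y" using that by simp
    also have "\<dots> = 0" unfolding Hc_hom1 assms by simp
    finally show ?thesis .
  qed
  have "Hc p0 p1 p2 q0 q1 q2 a b c d 1 0 = 0"
  proof (rule cont_zero[where h = "\<lambda>y. Hc p0 p1 p2 q0 q1 q2 a b c d 1 y"])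
    show "continuous_on UNIV (\<lambda>y. Hc p0 p1 p2 q0 q1 q2 a b c d 1 y)"
      unfolding Hc_def Ph_def by (intro continuous_intros)
  qed (use nz in auto)
  then show ?thesis using nz Hc_hom0[of p0 p1 p2 q0 q1 q2 a b c d x] by (cases "y = 0") simp_all
qed


lemma comm_H:
  assumes R: "(P, Q) \<in> Rat 2" and aut: "is_automorphism g (rat_eval (P, Q))"
  defines "p0 \<equiv> coeff P 0" and "p1 \<equiv> coeff P 1" and "p2 \<equiv> coeff P 2"
    and "q0 \<equiv> coeff Q 0" and "q1 \<equiv> coeff Q 1" and "q2 \<equiv> coeff Q 2"
  shows "\<exists>a b c d. a * d - b * c \<noteq> 0 \<and> \<not> (b = 0 \<and> c = 0 \<and> a = d) \<and>
     (\<forall>x y. Hc p0 p1 p2 q0 q1 q2 a b c d x y = 0)"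
proof -
  have cop: "coprime P Q" and md: "max (degree P) (degree Q) = 2" using R by (auto simp: Rat_def)
  have Peq: "P = [:p0, p1, p2:]" unfolding p0_def p1_def p2_def using md by (intro deg2_eq) simp
  have Qeq: "Q = [:q0, q1, q2:]" unfolding q0_def q1_def q2_def using md by (intro deg2_eq) simp
  from aut have gm: "g \<in> moebius" "g \<noteq> id" "g \<circ> rat_eval (P, Q) \<circ> inv g = rat_eval (P, Q)"
    by (auto simp: is_automorphism_def)
  obtain A B where AB: "(A, B) \<in> Rat 1" "g = rat_eval (A, B)" using gm(1) by (auto simp: moebius_def)
  have copAB: "coprime A B" and mdAB: "max (degree A) (degree B) = 1" using AB(1) by (auto simp: Rat_def)
  define a b c d where "a = coeff A 1" "b = coeff A 0" "c = coeff B 1" "d = coeff B 0"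
  have Aeq: "A = [:b, a:]" unfolding a_b_c_d_def using mdAB by (intro deg1_eq) simp
  have Beq: "B = [:d, c:]" unfolding a_b_c_d_def using mdAB by (intro deg1_eq) simp
  have det: "a * d - b * c \<noteq> 0"
  proof
    assume d0: "a * d - b * c = 0"
    show False
    proof (cases "c = 0")
      case False
      define z where "z = - d / c"
      have "poly B z = 0" using False by (simp add: Beq z_def)
      moreover have "poly A z = 0" using False d0 by (simp add: Aeq z_def field_simps)
      ultimately show False using copAB common_root_false by blast
    next
      case True
      then have "degree B = 0" by (simp add: Beq)
      then have "degree A = 1" using mdAB by simp
      then have "a \<noteq> 0" using Aeq by (metis degree_pCons_0 pCons_0_0 zero_neq_one)
      then have "d = 0" using d0 True by simp
      then have "B = 0" using True Beq by simp
      then have "is_unit A" using copAB by simp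
      then have "degree A = 0" using \<open>a \<noteq> 0\<close> Aeq by (simp add: is_unit_pCons_iff)
      then show False using \<open>degree A = 1\<close> by simp
    qed
  qed
  have nid: "\<not> (b = 0 \<and> c = 0 \<and> a = d)"
  proof
    assume h: "b = 0 \<and> c = 0 \<and> a = d"
    then have anz: "a \<noteq> 0" using det by auto
    have "g = id"
    proof
      fix x show "g x = id x"
        using h anz by (cases x) (simp_all add: AB(2) Aeq Beq)
    qed
    then show False using gm(2) by simp
  qed
  define f where "f = rat_eval (P, Q)"
  have ginj: "inj g" using moeb_inj[OF det] by (simp add: AB(2) Aeq Beq)
  have comm: "g (f x) = f (g x)" for x
  proof -
    have "f (g x) = (g \<circ> f \<circ> inv g) (g x)" using gm(3) by (simp add: f_def)
    also have "\<dots> = g (f x)" using ginj by simp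
    finally show ?thesis by simp
  qed
  have H1: "Hc p0 p1 p2 q0 q1 q2 a b c d z 1 = 0" if Qz: "poly Q z \<noteq> 0" and uz: "d + z * c \<noteq> 0" for z
  proof -
    define u where "u = d + z * c"
    define w where "w = (b + z * a) / u"
    define v where "v = poly P z / poly Q z"
    have gz: "g (Some z) = Some w" using uz by (simp add: AB(2) Aeq Beq w_def u_def)
    have fz: "f (Some z) = Some v" using Qz by (simp add: f_def v_def)
    have cm: "g (Some v) = f (Some w)" using comm[of "Some z"] gz fz by simp
    have key: "(b + v * a) * poly Q w - (d + v * c) * poly P w = 0"
    proof (cases "poly Q w = 0")
      case True
      then have "f (Some w) = None" by (simp add: f_def)
      then have "d + v * c = 0" using cm by (simp add: AB(2) Aeq Beq split: if_splits)
      then show ?thesis using True by simp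
    next
      case False
      then have "f (Some w) = Some (poly P w / poly Q w)" by (simp add: f_def)
      then have dv: "d + v * c \<noteq> 0" and e: "(b + v * a) / (d + v * c) = poly P w / poly Q w"
        using cm by (simp_all add: AB(2) Aeq Beq split: if_splits)
      from e have "(b + v * a) * poly Q w = poly P w * (d + v * c)" using dv False by (simp add: field_simps)
      then show ?thesis by (simp add: algebra_simps)
    qed
    have unz: "u \<noteq> 0" using uz by (simp add: u_def)
    have wu: "w * u = b + z * a" using unz by (simp add: w_def)
    have hq0: "u^2 * poly Q w = q0 * u^2 + q1 * (w * u) * u + q2 * (w * u)^2"
      unfolding Qeq by (simp add: algebra_simps power2_eq_square)
    have hp0: "u^2 * poly P w = p0 * u^2 + p1 * (w * u) * u + p2 * (w * u)^2"
      unfolding Peq by (simp add: algebra_simps power2_eq_square)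
    have hq: "Ph q0 q1 q2 (a * z + b * 1) (c * z + d * 1) = u^2 * poly Q w"
      unfolding hq0 wu by (simp add: Ph_def u_def algebra_simps)
    have hp: "Ph p0 p1 p2 (a * z + b * 1) (c * z + d * 1) = u^2 * poly P w"
      unfolding hp0 wu by (simp add: Ph_def u_def algebra_simps)
    have pz: "Ph p0 p1 p2 z 1 = poly P z" by (simp add: Ph_def Peq algebra_simps power2_eq_square)
    have qz: "Ph q0 q1 q2 z 1 = poly Q z" by (simp add: Ph_def Qeq algebra_simps power2_eq_square)
    have vq: "poly P z = v * poly Q z" using Qz by (simp add: v_def)
    have "Hc p0 p1 p2 q0 q1 q2 a b c d z 1 = poly Q z * u^2 * ((b + v * a) * poly Q w - (d + v * c) * poly P w)"
      unfolding Hc_def hq hp pz qz vq by (simp add: algebra_simps)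
    then show ?thesis using key by simp
  qed
  define Hp where "Hp = (smult a P + smult b Q) * (smult q0 ([:d,c:]^2) + smult q1 ([:b,a:]*[:d,c:]) + smult q2 ([:b,a:]^2))
     - (smult c P + smult d Q) * (smult p0 ([:d,c:]^2) + smult p1 ([:b,a:]*[:d,c:]) + smult p2 ([:b,a:]^2))"
  have Hpz: "poly Hp z = Hc p0 p1 p2 q0 q1 q2 a b c d z 1" for z
    unfolding Hp_def Hc_def Ph_def Peq Qeq by (simp add: power2_eq_square; algebra)
  have "poly (Hp * (Q * [:d, c:])) z = 0" for z
  proof -
    have pe: "poly (Hp * (Q * [:d, c:])) z = poly Hp z * (poly Q z * (d + z * c))" by (simp add: algebra_simps)
    show ?thesis
    proof (cases "poly Q z = 0 \<or> d + z * c = 0")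
      case True then show ?thesis unfolding pe by auto
    next
      case False then show ?thesis unfolding pe using H1[of z] Hpz[of z] by simp
    qed
  qed
  then have "Hp * (Q * [:d, c:]) = 0" using poly_all_0_iff_0 by blast
  moreover have "Q \<noteq> 0"
  proof
    assume "Q = 0"
    then have "is_unit P" using cop by simp
    then have "degree P = 0" using \<open>Q = 0\<close> cop md by (metis is_unit_iff_degree not_is_unit_0)
    then show False using md \<open>Q = 0\<close> by simp
  qed
  moreover have "[:d, c:] \<noteq> 0" using det by auto
  ultimately have "Hp = 0" by (metis mult_eq_0_iff)
  then have "\<And>z. Hc p0 p1 p2 q0 q1 q2 a b c d z 1 = 0" using Hpz by (metis poly_0)
  then have "\<forall>x y. Hc p0 p1 p2 q0 q1 q2 a b c d x y = 0" using Hc_all by blast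
  then show ?thesis using det nid by blast
qed


definition "Gc x y = (- 2 * x^3 - x^2 * y + x^2 + 8 * x * y + 4 * y^2 - 12 * x - 12 * y + 36 :: complex)"

lemma formA:
  assumes "Dc 0 p1 0 q0 0 q2 \<noteq> 0"
  shows "Gc (N1c 0 p1 0 q0 0 q2 / Dc 0 p1 0 q0 0 q2) (N2c 0 p1 0 q0 0 q2 / Dc 0 p1 0 q0 0 q2) = 0"
proof -
  have D: "Dc 0 p1 0 q0 0 q2 = p1^2 * q0 * q2" by (simp add: Dc_def power2_eq_square)
  have n1: "N1c 0 p1 0 q0 0 q2 = 4 * p1 * q0^2 * q2 - 2 * p1^2 * q0 * q2 + p1^3 * q2" by (simp add: N1c_def)
  have n2: "N2c 0 p1 0 q0 0 q2 = 4 * q0^3 * q2 - 4 * p1 * q0^2 * q2 + 5 * p1^2 * q0 * q2 - 2 * p1^3 * q2" by (simp add: N2c_def)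
  have nz: "p1 \<noteq> 0" "q0 \<noteq> 0" "q2 \<noteq> 0" using assms D by auto
  show ?thesis unfolding D n1 n2 Gc_def using nz by (simp add: field_simps) algebra
qed

lemma formB:
  assumes "Dc p0 0 p2 0 q1 0 \<noteq> 0"
  shows "Gc (N1c p0 0 p2 0 q1 0 / Dc p0 0 p2 0 q1 0) (N2c p0 0 p2 0 q1 0 / Dc p0 0 p2 0 q1 0) = 0"
proof -
  have D: "Dc p0 0 p2 0 q1 0 = p0 * p2 * q1^2" by (simp add: Dc_def power2_eq_square)
  have n1: "N1c p0 0 p2 0 q1 0 = p0 * q1^3 - 2 * p0 * p2 * q1^2 + 4 * p0 * p2^2 * q1" by (simp add: N1c_def)
  have n2: "N2c p0 0 p2 0 q1 0 = - 2 * p0 * q1^3 + 5 * p0 * p2 * q1^2 - 4 * p0 * p2^2 * q1 + 4 * p0 * p2^3" by (simp add: N2c_def)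
  have nz: "p0 \<noteq> 0" "p2 \<noteq> 0" "q1 \<noteq> 0" using assms D by auto
  show ?thesis unfolding D n1 n2 Gc_def using nz by (simp add: field_simps) algebra
qed

lemma formC:
  assumes "Dc p0 0 0 0 0 q2 \<noteq> 0"
  shows "Gc (N1c p0 0 0 0 0 q2 / Dc p0 0 0 0 0 q2) (N2c p0 0 0 0 0 q2 / Dc p0 0 0 0 0 q2) = 0"
proof -
  have D: "Dc p0 0 0 0 0 q2 = p0^2 * q2^2" by (simp add: Dc_def power2_eq_square)
  have n1: "N1c p0 0 0 0 0 q2 = - 6 * (p0^2 * q2^2)" by (simp add: N1c_def)
  have n2: "N2c p0 0 0 0 0 q2 = 12 * (p0^2 * q2^2)" by (simp add: N2c_def)
  have nz: "p0^2 * q2^2 \<noteq> 0" using assms D by auto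
  show ?thesis unfolding D n1 n2 Gc_def using nz by (simp add: Gc_def)
qed


definition "trP0 p0 p1 p2 q0 q1 q2 t = (p0 - t * p1 + t^2 * p2 + t * (q0 - t * q1 + t^2 * q2) :: complex)"
definition "trP1 p0 p1 p2 q0 q1 q2 t = (p1 - 2 * t * p2 + t * (q1 - 2 * t * q2) :: complex)"
definition "trP2 p0 p1 p2 q0 q1 q2 t = (p2 + t * q2 :: complex)"
definition "trQ0 q0 q1 q2 t = (q0 - t * q1 + t^2 * q2 :: complex)"
definition "trQ1 q0 q1 q2 t = (q1 - 2 * t * q2 :: complex)"

lemma tr_H:
  "Hc (trP0 p0 p1 p2 q0 q1 q2 t) (trP1 p0 p1 p2 q0 q1 q2 t) (trP2 p0 p1 p2 q0 q1 q2 t)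
      (trQ0 q0 q1 q2 t) (trQ1 q0 q1 q2 t) q2
      (a + t * c) (b + t * d - t * (a + t * c)) c (d - t * c) x y
   = Hc p0 p1 p2 q0 q1 q2 a b c d (x - t * y) y"
  unfolding Hc_def Ph_def trP0_def trP1_def trP2_def trQ0_def trQ1_def by algebra

lemma tr_D:
  "Dc (trP0 p0 p1 p2 q0 q1 q2 t) (trP1 p0 p1 p2 q0 q1 q2 t) (trP2 p0 p1 p2 q0 q1 q2 t)
      (trQ0 q0 q1 q2 t) (trQ1 q0 q1 q2 t) q2 = Dc p0 p1 p2 q0 q1 q2"
  unfolding Dc_def trP0_def trP1_def trP2_def trQ0_def trQ1_def by algebra

lemma tr_N1:
  "N1c (trP0 p0 p1 p2 q0 q1 q2 t) (trP1 p0 p1 p2 q0 q1 q2 t) (trP2 p0 p1 p2 q0 q1 q2 t)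
      (trQ0 q0 q1 q2 t) (trQ1 q0 q1 q2 t) q2 = N1c p0 p1 p2 q0 q1 q2"
  unfolding N1c_def trP0_def trP1_def trP2_def trQ0_def trQ1_def by algebra

lemma tr_N2:
  "N2c (trP0 p0 p1 p2 q0 q1 q2 t) (trP1 p0 p1 p2 q0 q1 q2 t) (trP2 p0 p1 p2 q0 q1 q2 t)
      (trQ0 q0 q1 q2 t) (trQ1 q0 q1 q2 t) q2 = N2c p0 p1 p2 q0 q1 q2"
  unfolding N2c_def trP0_def trP1_def trP2_def trQ0_def trQ1_def by algebra

lemma sw_H: "Hc q2 q1 q0 p2 p1 p0 d c b a x y = - Hc p0 p1 p2 q0 q1 q2 a b c d y x"
  unfolding Hc_def Ph_def by algebra

lemma sw_D: "Dc q2 q1 q0 p2 p1 p0 = Dc p0 p1 p2 q0 q1 q2"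
  unfolding Dc_def by algebra
lemma sw_N1: "N1c q2 q1 q0 p2 p1 p0 = N1c p0 p1 p2 q0 q1 q2"
  unfolding N1c_def by algebra
lemma sw_N2: "N2c q2 q1 q0 p2 p1 p0 = N2c p0 p1 p2 q0 q1 q2"
  unfolding N2c_def by algebra


lemma coeffs5:
  fixes h0 h1 h2 h3 h4 :: complex
  assumes "\<And>z. h0 + h1 * z + h2 * z^2 + h3 * z^3 + h4 * z^4 = 0"
  shows "h0 = 0 \<and> h1 = 0 \<and> h2 = 0 \<and> h3 = 0 \<and> h4 = 0"
proof -
  have "poly [:h0, h1, h2, h3, h4:] z = 0" for z
    using assms[of z] by (simp add: algebra_simps power2_eq_square power3_eq_cube power4_eq_xxxx)
  then have "[:h0, h1, h2, h3, h4:] = 0" using poly_all_0_iff_0 by blast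
  then show ?thesis by simp
qed

lemma alg_diag:
  assumes D: "Dc p0 p1 p2 q0 q1 q2 \<noteq> 0" and ad: "a \<noteq> d" "a \<noteq> 0" "d \<noteq> 0"
    and H: "\<And>z. Hc p0 p1 p2 q0 q1 q2 a 0 0 d z 1 = 0"
  shows "Gc (N1c p0 p1 p2 q0 q1 q2 / Dc p0 p1 p2 q0 q1 q2) (N2c p0 p1 p2 q0 q1 q2 / Dc p0 p1 p2 q0 q1 q2) = 0"
proof -
  have "(a * d^2 * p0 * q0 - d^3 * p0 * q0) + (a^2 * d * p0 * q1 - d^3 * p0 * q1) * z
     + (a * d^2 * p2 * q0 - a * d^2 * p1 * q1 + a^2 * d * p1 * q1 - a^2 * d * p2 * q0 + a^3 * p0 * q2 - d^3 * p0 * q2) * z^2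
     + (a^3 * p1 * q2 - a * d^2 * p1 * q2) * z^3 + (a^3 * p2 * q2 - a^2 * d * p2 * q2) * z^4 = 0" for z
    using H[of z] unfolding Hc_def Ph_def by (simp add: power2_eq_square power3_eq_cube power4_eq_xxxx; algebra)
  from coeffs5[OF this] have h:
    "d^2 * (a - d) * (p0 * q0) = 0" "d * (a - d) * (a + d) * (p0 * q1) = 0"
    "(a - d) * ((a^2 + a * d + d^2) * p0 * q2 + a * d * (p1 * q1 - p2 * q0)) = 0"
    "a * (a - d) * (a + d) * (p1 * q2) = 0" "a^2 * (a - d) * (p2 * q2) = 0"
    by (simp_all add: algebra_simps power2_eq_square power3_eq_cube)
  have amd: "a - d \<noteq> 0" using ad by simp
  have e0: "p0 * q0 = 0" using h(1) amd ad by simp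
  have e4: "p2 * q2 = 0" using h(5) amd ad by simp
  have e2: "(a^2 + a * d + d^2) * p0 * q2 + a * d * (p1 * q1 - p2 * q0) = 0" using h(3) amd by simp
  show ?thesis
  proof (cases "a + d = 0")
    case True
    then have dd: "d = - a" by (simp add: add_eq_0_iff)
    have "a^2 * (p0 * q2 - p1 * q1 + p2 * q0) = (a^2 + a * d + d^2) * p0 * q2 + a * d * (p1 * q1 - p2 * q0)"
      unfolding dd by algebra
    then have "a^2 * (p0 * q2 - p1 * q1 + p2 * q0) = 0" using e2 by simp
    then have "p0 * q2 - p1 * q1 + p2 * q0 = 0" using ad by simp
    then have e2': "p1 * q1 = p0 * q2 + p2 * q0" by (simp add: algebra_simps)
    show ?thesis
    proof (cases "p0 = 0")
      case p00: True
      show ?thesis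
      proof (cases "p2 = 0")
        case True
        then have "p1 * q1 = 0" using e2' p00 by simp
        moreover have "p1 \<noteq> 0" using D p00 True by (auto simp: Dc_def)
        ultimately have "q1 = 0" by simp
        then show ?thesis using formA D p00 True by simp
      next
        case False
        then have "q2 = 0" using e4 by simp
        then have "Dc p0 p1 p2 q0 q1 q2 = 0" using p00 e2' by (simp add: Dc_def power2_eq_square algebra_simps)
        then show ?thesis using D by simp
      qed
    next
      case p0n: False
      then have q00: "q0 = 0" using e0 by simp
      show ?thesis
      proof (cases "q2 = 0")
        case True
        then have "p1 * q1 = 0" using e2' q00 by simp
        moreover have "q1 \<noteq> 0" using D q00 True by (auto simp: Dc_def)
        ultimately have "p1 = 0" by simp
        then show ?thesis using formB D q00 True by simp
      next
        case False
        then have "p2 = 0" using e4 by simp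
        then have "Dc p0 p1 p2 q0 q1 q2 = 0" using q00 e2' by (simp add: Dc_def power2_eq_square algebra_simps)
        then show ?thesis using D by simp
      qed
    qed
  next
    case apd: False
    have e1: "p0 * q1 = 0" using h(2) amd apd ad by simp
    have e3: "p1 * q2 = 0" using h(4) amd apd ad by simp
    show ?thesis
    proof (cases "p0 = 0")
      case p0n: False
      then have "q0 = 0" "q1 = 0" using e0 e1 by auto
      moreover then have "q2 \<noteq> 0" using D by (auto simp: Dc_def)
      moreover then have "p1 = 0" "p2 = 0" using e3 e4 by auto
      ultimately show ?thesis using formC D by simp
    next
      case p00: True
      have adnz: "a * d \<noteq> 0" using ad by simp
      have "p1 * q1 = p2 * q0" using e2 p00 adnz by (simp add: algebra_simps)
      then have "Dc p0 p1 p2 q0 q1 q2 = 0"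
      proof (cases "q2 = 0")
        case True
        assume "p1 * q1 = p2 * q0"
        then show ?thesis using True p00 by (simp add: Dc_def power2_eq_square algebra_simps)
      next
        case False
        then have "p1 = 0" "p2 = 0" using e3 e4 by auto
        then show ?thesis using p00 by (simp add: Dc_def)
      qed
      then show ?thesis using D by simp
    qed
  qed
qed

lemma alg_par:
  assumes D: "Dc p0 p1 p2 q0 q1 q2 \<noteq> 0" and ab: "a \<noteq> 0" "b \<noteq> 0"
    and H: "\<And>z. Hc p0 p1 p2 q0 q1 q2 a b 0 a z 1 = 0"
  shows False
proof -
  have "(a * b^2 * p0 * q2 - a * b^2 * p2 * q0 + a * b^2 * q0 * q1 + a^2 * b * p0 * q1 - a^2 * b * p1 * q0 + a^2 * b * q0^2 + b^3 * q0 * q2)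
     + (a * b^2 * p1 * q2 - a * b^2 * p2 * q1 + 2 * a * b^2 * q0 * q2 + a * b^2 * q1^2 + 2 * a^2 * b * p0 * q2 - 2 * a^2 * b * p2 * q0 + 2 * a^2 * b * q0 * q1 + b^3 * q1 * q2) * z
     + (3 * a * b^2 * q1 * q2 + a^2 * b * p1 * q2 - a^2 * b * p2 * q1 + 2 * a^2 * b * q0 * q2 + a^2 * b * q1^2 + b^3 * q2^2) * z^2
     + (2 * a * b^2 * q2^2 + 2 * a^2 * b * q1 * q2) * z^3 + (a^2 * b * q2^2) * z^4 = 0" for z
    using H[of z] unfolding Hc_def Ph_def by (simp add: power2_eq_square power3_eq_cube power4_eq_xxxx; algebra)
  from coeffs5[OF this] have h:
    "a * b^2 * p0 * q2 - a * b^2 * p2 * q0 + a * b^2 * q0 * q1 + a^2 * b * p0 * q1 - a^2 * b * p1 * q0 + a^2 * b * q0^2 + b^3 * q0 * q2 = 0"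
    "a * b^2 * p1 * q2 - a * b^2 * p2 * q1 + 2 * a * b^2 * q0 * q2 + a * b^2 * q1^2 + 2 * a^2 * b * p0 * q2 - 2 * a^2 * b * p2 * q0 + 2 * a^2 * b * q0 * q1 + b^3 * q1 * q2 = 0"
    "3 * a * b^2 * q1 * q2 + a^2 * b * p1 * q2 - a^2 * b * p2 * q1 + 2 * a^2 * b * q0 * q2 + a^2 * b * q1^2 + b^3 * q2^2 = 0"
    "a^2 * b * q2^2 = 0" by auto
  have q20: "q2 = 0" using h(4) ab by simp
  have k2: "a^2 * b * (q1 * (q1 - p2)) = 0" using h(3) q20 by (simp add: algebra_simps power2_eq_square)
  then have k2': "q1 * (q1 - p2) = 0" using ab by simp
  have k1: "a * b^2 * (q1 * (q1 - p2)) + 2 * a^2 * b * (q0 * (q1 - p2)) = 0" using h(2) q20 by (simp add: algebra_simps power2_eq_square)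
  then have k1': "q0 * (q1 - p2) = 0" using k2' ab by simp
  have k0: "a * b^2 * (q0 * (q1 - p2)) + a^2 * b * (p0 * q1 - p1 * q0 + q0^2) = 0" using h(1) q20 by (simp add: algebra_simps power2_eq_square)
  then have k0': "p0 * q1 - p1 * q0 + q0^2 = 0" using k1' ab by simp
  have "Dc p0 p1 p2 q0 q1 q2 = 0"
  proof (cases "q1 = p2")
    case True
    then have "Dc p0 p1 p2 q0 q1 q2 = p2^2 * (p0 * q1 - p1 * q0 + q0^2)" using q20 by (simp add: Dc_def power2_eq_square algebra_simps)
    then show ?thesis using k0' by simp
  next
    case False
    then have "q1 = 0" "q0 = 0" using k2' k1' by auto
    then show ?thesis using q20 by (simp add: Dc_def)
  qed
  then show False using D by simp
qed


lemma alg_aff: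
  assumes D: "Dc p0 p1 p2 q0 q1 q2 \<noteq> 0" and ad: "a * d \<noteq> 0" and nid: "\<not> (b = 0 \<and> a = d)"
    and H: "\<And>x y. Hc p0 p1 p2 q0 q1 q2 a b 0 d x y = 0"
  shows "Gc (N1c p0 p1 p2 q0 q1 q2 / Dc p0 p1 p2 q0 q1 q2) (N2c p0 p1 p2 q0 q1 q2 / Dc p0 p1 p2 q0 q1 q2) = 0"
proof (cases "a = d")
  case True
  then have "b \<noteq> 0" "a \<noteq> 0" using nid ad by auto
  moreover have "\<And>z. Hc p0 p1 p2 q0 q1 q2 a b 0 a z 1 = 0" using H True by simp
  ultimately show ?thesis using alg_par[OF D] by blast
next
  case False
  define t where "t = b / (a - d)"
  have b': "b + t * d - t * (a + t * 0) = 0" using False by (simp add: t_def field_simps)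
  have H': "Hc (trP0 p0 p1 p2 q0 q1 q2 t) (trP1 p0 p1 p2 q0 q1 q2 t) (trP2 p0 p1 p2 q0 q1 q2 t)
      (trQ0 q0 q1 q2 t) (trQ1 q0 q1 q2 t) q2 a 0 0 d z 1 = 0" for z
    using tr_H[of p0 p1 p2 q0 q1 q2 t a 0 b d z 1] H b' by simp
  have D': "Dc (trP0 p0 p1 p2 q0 q1 q2 t) (trP1 p0 p1 p2 q0 q1 q2 t) (trP2 p0 p1 p2 q0 q1 q2 t)
      (trQ0 q0 q1 q2 t) (trQ1 q0 q1 q2 t) q2 \<noteq> 0" using D tr_D by simp
  have "a \<noteq> 0" "d \<noteq> 0" using ad by auto
  from alg_diag[OF D' False this H'] show ?thesis unfolding tr_D tr_N1 tr_N2 .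
qed

lemma alg_gen:
  assumes D: "Dc p0 p1 p2 q0 q1 q2 \<noteq> 0" and det: "a * d - b * c \<noteq> 0" and nid: "\<not> (b = 0 \<and> c = 0 \<and> a = d)"
    and H: "\<And>x y. Hc p0 p1 p2 q0 q1 q2 a b c d x y = 0"
  shows "Gc (N1c p0 p1 p2 q0 q1 q2 / Dc p0 p1 p2 q0 q1 q2) (N2c p0 p1 p2 q0 q1 q2 / Dc p0 p1 p2 q0 q1 q2) = 0"
proof (cases "c = 0")
  case True
  then show ?thesis using alg_aff[OF D] det nid H by simp
next
  case False
  define s where "s = csqrt ((d - a)^2 + 4 * c * b)"
  define r where "r = ((a - d) + s) / (2 * c)"
  have s2: "s^2 = (d - a)^2 + 4 * c * b" by (simp add: s_def)
  have root: "c * r^2 + (d - a) * r - b = 0"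
  proof -
    have "4 * c * (c * r^2 + (d - a) * r - b) = s^2 - (d - a)^2 - 4 * c * b"
      using False unfolding r_def by (simp add: field_simps power2_eq_square)
    then show ?thesis using s2 False by simp
  qed
  define t where "t = - r"
  define P0 where "P0 = trP0 p0 p1 p2 q0 q1 q2 t"
  define P1 where "P1 = trP1 p0 p1 p2 q0 q1 q2 t"
  define P2 where "P2 = trP2 p0 p1 p2 q0 q1 q2 t"
  define Q0 where "Q0 = trQ0 q0 q1 q2 t"
  define Q1 where "Q1 = trQ1 q0 q1 q2 t"
  have b': "b + t * d - t * (a + t * c) = 0" using root unfolding t_def by (simp add: algebra_simps power2_eq_square)
  have H': "Hc P0 P1 P2 Q0 Q1 q2 (a + t * c) 0 c (d - t * c) x y = 0" for x y
    using tr_H[of p0 p1 p2 q0 q1 q2 t a c b d x y] H b' unfolding P0_def P1_def P2_def Q0_def Q1_def by simp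
  have H'': "Hc q2 Q1 Q0 P2 P1 P0 (d - t * c) c 0 (a + t * c) x y = 0" for x y
  proof -
    have "Hc q2 Q1 Q0 P2 P1 P0 (d - t * c) c 0 (a + t * c) x y = - Hc P0 P1 P2 Q0 Q1 q2 (a + t * c) 0 c (d - t * c) y x"
      by (rule sw_H)
    then show ?thesis using H' by simp
  qed
  have swD: "Dc q2 Q1 Q0 P2 P1 P0 = Dc P0 P1 P2 Q0 Q1 q2" by (rule sw_D)
  have swN1: "N1c q2 Q1 Q0 P2 P1 P0 = N1c P0 P1 P2 Q0 Q1 q2" by (rule sw_N1)
  have swN2: "N2c q2 Q1 Q0 P2 P1 P0 = N2c P0 P1 P2 Q0 Q1 q2" by (rule sw_N2)
  have trD: "Dc P0 P1 P2 Q0 Q1 q2 = Dc p0 p1 p2 q0 q1 q2" unfolding P0_def P1_def P2_def Q0_def Q1_def by (rule tr_D)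
  have trN1: "N1c P0 P1 P2 Q0 Q1 q2 = N1c p0 p1 p2 q0 q1 q2" unfolding P0_def P1_def P2_def Q0_def Q1_def by (rule tr_N1)
  have trN2: "N2c P0 P1 P2 Q0 Q1 q2 = N2c p0 p1 p2 q0 q1 q2" unfolding P0_def P1_def P2_def Q0_def Q1_def by (rule tr_N2)
  have D'': "Dc q2 Q1 Q0 P2 P1 P0 \<noteq> 0" using D unfolding swD trD .
  have detM: "(a + t * c) * (d - t * c) - (b + t * d - t * (a + t * c)) * c = a * d - b * c"
    by (simp add: algebra_simps)
  then have "(d - t * c) * (a + t * c) \<noteq> 0" using det b' by (simp add: mult.commute)
  from alg_aff[OF D'' this _ H''] False
  show ?thesis unfolding swD swN1 swN2 trD trN1 trN2 by simp
qed


lemma curve_param: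
  fixes k :: complex
  assumes "k \<noteq> 0"
  shows "Gc (4 * k - 2 + 1 / k) (4 * k ^ 2 - 4 * k + 5 - 2 / k) = 0"
  unfolding Gc_def using assms by (simp add: field_simps) algebra

lemma curve_inv:
  fixes x y :: complex
  assumes "Gc x y = 0"
  shows "\<exists>k. k \<noteq> 0 \<and> x = 4 * k - 2 + 1 / k \<and> y = 4 * k ^ 2 - 4 * k + 5 - 2 / k"
proof (cases "x = -6")
  case True
  then have "4 * (y - 12)^2 = 0" using assms unfolding Gc_def by algebra
  then have "y = 12" by simp
  then show ?thesis using True by (intro exI[of _ "-1/2"]) (simp add: power2_eq_square)
next
  case False
  then have x6: "x + 6 \<noteq> 0" by (metis add_eq_0_iff2 neg_equal_iff_equal)
  define k where "k = (y + 2 * x) / (x + 6)"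
  have G: "Gc x y = 4 * (y + 2 * x)^2 - (x + 2) * (x + 6) * (y + 2 * x) + (x + 6)^2"
    unfolding Gc_def by algebra
  have s: "y + 2 * x = k * (x + 6)" using x6 by (simp add: k_def)
  have "(x + 6)^2 * (4 * k^2 - (x + 2) * k + 1) = 0" using assms unfolding G s by algebra
  then have q: "4 * k^2 - (x + 2) * k + 1 = 0" using x6 by simp
  have knz: "k \<noteq> 0" using q by auto
  have xe: "x = 4 * k - 2 + 1 / k" using q knz by (simp add: field_simps) algebra
  have ye: "y = 4 * k ^ 2 - 4 * k + 5 - 2 / k"
  proof -
    have "y = k * (x + 6) - 2 * x" using s by (simp add: eq_diff_eq)
    also have "\<dots> = 4 * k ^ 2 - 4 * k + 5 - 2 / k" unfolding xe using knz by (simp add: field_simps) algebra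
    finally show ?thesis .
  qed
  show ?thesis using knz xe ye by blast
qed

lemma image_curve:
  "(\<lambda>k::complex. (4 * k - 2 + 1 / k, 4 * k ^ 2 - 4 * k + 5 - 2 / k)) ` (UNIV - {0}) = {(x, y). Gc x y = 0}"
proof
  show "(\<lambda>k::complex. (4 * k - 2 + 1 / k, 4 * k ^ 2 - 4 * k + 5 - 2 / k)) ` (UNIV - {0}) \<subseteq> {(x, y). Gc x y = 0}"
    using curve_param by auto
  show "{(x, y). Gc x y = 0} \<subseteq> (\<lambda>k::complex. (4 * k - 2 + 1 / k, 4 * k ^ 2 - 4 * k + 5 - 2 / k)) ` (UNIV - {0})"
  proof safe
    fix x y :: complex assume "Gc x y = 0"
    then obtain k where "k \<noteq> 0" "x = 4 * k - 2 + 1 / k" "y = 4 * k ^ 2 - 4 * k + 5 - 2 / k"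
      using curve_inv by blast
    then show "(x, y) \<in> (\<lambda>k::complex. (4 * k - 2 + 1 / k, 4 * k ^ 2 - 4 * k + 5 - 2 / k)) ` (UNIV - {0})"
      by auto
  qed
qed

lemma param_inj:
  "inj_on (\<lambda>k::complex. (4 * k - 2 + 1 / k, 4 * k ^ 2 - 4 * k + 5 - 2 / k)) (UNIV - {0})"
proof (rule inj_onI)
  fix k l :: complex
  assume k: "k \<in> UNIV - {0}" and l: "l \<in> UNIV - {0}"
    and eq: "(4 * k - 2 + 1 / k, 4 * k ^ 2 - 4 * k + 5 - 2 / k) = (4 * l - 2 + 1 / l, 4 * l ^ 2 - 4 * l + 5 - 2 / l)"
  have kn: "k \<noteq> 0" and ln: "l \<noteq> 0" using k l by auto
  have e1: "4 * k - 2 + 1 / k = 4 * l - 2 + 1 / l" and e2: "4 * k ^ 2 - 4 * k + 5 - 2 / k = 4 * l ^ 2 - 4 * l + 5 - 2 / l"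
    using eq by auto
  have f1: "(k - l) * (4 * k * l - 1) = 0" using e1 kn ln by (simp add: field_simps; (algebra)?)
  have f2: "(k - l) * (4 * k * l * (k + l) - 4 * k * l + 2) = 0" using e2 kn ln by (simp add: field_simps) algebra
  show "k = l"
  proof (rule ccontr)
    assume "k \<noteq> l"
    then have g1: "4 * k * l = 1" and g2: "4 * k * l * (k + l) - 4 * k * l + 2 = 0" using f1 f2 by auto
    then have "k + l = -1" by algebra
    then have "(k - l)^2 = 0" using g1 by algebra
    then show False using \<open>k \<noteq> l\<close> by simp
  qed
qed

lemma locus_sub: "symmetry_locus \<subseteq> {(x, y). Gc x y = 0}"
proof
  fix s assume "s \<in> symmetry_locus"
  then obtain f g where s: "s = (sigma1 f, sigma2 f)" and R: "f \<in> Rat 2" and aut: "is_automorphism g (rat_eval f)"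
    unfolding symmetry_locus_def by blast
  obtain P Q where f: "f = (P, Q)" by (cases f)
  from comm_H[OF R[unfolded f] aut[unfolded f]] obtain a b c d where
    abcd: "a * d - b * c \<noteq> 0" "\<not> (b = 0 \<and> c = 0 \<and> a = d)"
    "\<forall>x y. Hc (coeff P 0) (coeff P 1) (coeff P 2) (coeff Q 0) (coeff Q 1) (coeff Q 2) a b c d x y = 0" by blast
  note sf = sigma_formula[OF R[unfolded f]]
  have "Gc (N1c (coeff P 0) (coeff P 1) (coeff P 2) (coeff Q 0) (coeff Q 1) (coeff Q 2) / Dc (coeff P 0) (coeff P 1) (coeff P 2) (coeff Q 0) (coeff Q 1) (coeff Q 2))
           (N2c (coeff P 0) (coeff P 1) (coeff P 2) (coeff Q 0) (coeff Q 1) (coeff Q 2) / Dc (coeff P 0) (coeff P 1) (coeff P 2) (coeff Q 0) (coeff Q 1) (coeff Q 2)) = 0"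
    using alg_gen[of "coeff P 0" "coeff P 1" "coeff P 2" "coeff Q 0" "coeff Q 1" "coeff Q 2" a d b c] sf abcd by blast
  then show "s \<in> {(x, y). Gc x y = 0}" using s f sf by simp
qed

lemma coprime_bez:
  fixes P Q U V :: "complex poly"
  assumes "U * P + V * Q = 1"
  shows "coprime P Q"
proof (rule coprimeI)
  fix c assume "c dvd P" "c dvd Q"
  then have "c dvd U * P + V * Q" by simp
  then show "is_unit c" using assms by simp
qed

lemma locus_sup: "(\<lambda>k::complex. (4 * k - 2 + 1 / k, 4 * k ^ 2 - 4 * k + 5 - 2 / k)) ` (UNIV - {0}) \<subseteq> symmetry_locus"
proof (rule subsetI)
  fix s assume "s \<in> (\<lambda>k::complex. (4 * k - 2 + 1 / k, 4 * k ^ 2 - 4 * k + 5 - 2 / k)) ` (UNIV - {0})"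
  then obtain k :: complex where "k \<noteq> 0" and s: "s = (4 * k - 2 + 1 / k, 4 * k ^ 2 - 4 * k + 5 - 2 / k)" by auto
  define P where "P = [:k, 0, k:]"
  define Q where "Q = [:0, 1 :: complex:]"
  have cop: "coprime P Q"
    by (rule coprime_bez[of "[:1 / k:]" _ "[:0, -1:]"]) (use \<open>k \<noteq> 0\<close> in \<open>simp add: P_def Q_def\<close>)
  have R: "(P, Q) \<in> Rat 2" using cop \<open>k \<noteq> 0\<close> by (simp add: Rat_def P_def Q_def)
  define g where "g = rat_eval ([:0, -1:], [:1:])"
  have gS: "g (Some z) = Some (- z)" for z by (simp add: g_def)
  have gN: "g None = None" by (simp add: g_def)
  have gg: "g \<circ> g = id"
  proof
    fix x show "(g \<circ> g) x = id x" by (cases x) (simp_all add: gS gN)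
  qed
  then have ig: "inv g = g" by (simp add: inv_unique_comp)
  have gm: "g \<in> moebius"
  proof -
    have "coprime [:0, -1:] [:1::complex:]" by (rule coprime_bez[of 0 _ 1]) simp
    then have "([:0, -1:], [:1:]) \<in> Rat 1" by (simp add: Rat_def)
    then show ?thesis unfolding moebius_def g_def by blast
  qed
  have gid: "g \<noteq> id"
  proof
    assume "g = id"
    then have "g (Some 1) = Some 1" by simp
    then show False by (simp add: gS)
  qed
  have fS: "rat_eval (P, Q) (Some z) = (if z = 0 then None else Some ((k + k * z^2) / z))" for z
    by (simp add: P_def Q_def algebra_simps power2_eq_square)
  have fN: "rat_eval (P, Q) None = None" using \<open>k \<noteq> 0\<close> by (simp add: P_def Q_def)
  have comm: "g \<circ> rat_eval (P, Q) \<circ> inv g = rat_eval (P, Q)"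
  proof
    fix x show "(g \<circ> rat_eval (P, Q) \<circ> inv g) x = rat_eval (P, Q) x"
    proof (cases x)
      case None then show ?thesis by (simp add: ig gN fN del: rat_eval.simps)
    next
      case (Some z)
      then show ?thesis by (cases "z = 0") (simp_all add: ig gS gN fS del: rat_eval.simps)
    qed
  qed
  have aut: "is_automorphism g (rat_eval (P, Q))"
    unfolding is_automorphism_def using gm gid comm by blast
  have sf: "sigma1 (P, Q) = N1c k 0 k 0 1 0 / Dc k 0 k 0 1 0" "sigma2 (P, Q) = N2c k 0 k 0 1 0 / Dc k 0 k 0 1 0"
    using sigma_formula[OF R] by (simp_all add: P_def Q_def numeral_2_eq_2)
  have D: "Dc k 0 k 0 1 0 = k^2" by (simp add: Dc_def power2_eq_square)
  have "sigma1 (P, Q) = 4 * k - 2 + 1 / k" unfolding sf D using \<open>k \<noteq> 0\<close>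
    by (simp add: N1c_def field_simps power2_eq_square; (algebra)?)
  moreover have "sigma2 (P, Q) = 4 * k ^ 2 - 4 * k + 5 - 2 / k" unfolding sf D using \<open>k \<noteq> 0\<close>
    by (simp add: N2c_def field_simps power2_eq_square; (algebra)?)
  ultimately show "s \<in> symmetry_locus"
    unfolding symmetry_locus_def s using R aut by force
qed


definition cc :: "nat \<Rightarrow> nat \<Rightarrow> complex" where
  "cc i j = (if i = 3 \<and> j = 0 then -2 else if i = 2 \<and> j = 1 then -1 else if i = 2 \<and> j = 0 then 1
     else if i = 1 \<and> j = 1 then 8 else if i = 0 \<and> j = 2 then 4 else if i = 1 \<and> j = 0 then -12
     else if i = 0 \<and> j = 1 then -12 else if i = 0 \<and> j = 0 then 36 else 0)"

lemma cc_supp: "{(i, j). cc i j \<noteq> 0} = {(3,0), (2,1), (2,0), (1,1), (0,2), (1,0), (0,1), (0,0)}"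
  by (auto simp: cc_def split: if_splits)

lemma cc_bipoly: "is_bipoly cc"
  unfolding is_bipoly_def cc_supp by simp

lemma cc_eval: "bpoly_eval cc x y = Gc x y"
  unfolding bpoly_eval_def cc_supp Gc_def by (simp add: cc_def power2_eq_square power3_eq_cube algebra_simps)

lemma cc_eval_fun: "bpoly_eval cc = Gc"
  by (intro ext) (rule cc_eval)

lemma cc_bdeg: "bdeg cc = 3"
proof -
  have "{i + j |i j. cc i j \<noteq> 0} = (\<lambda>(i, j). i + j) ` {(i, j). cc i j \<noteq> 0}" by auto
  also have "\<dots> = {0, 1, 2, 3}" unfolding cc_supp by auto
  finally show ?thesis unfolding bdeg_def by simp
qed

lemma cc_zero_set: "zero_set cc = {(x, y). Gc x y = 0}"
  unfolding zero_set_def cc_eval by simp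

lemma minimal:
  assumes bp: "is_bipoly c'" and nz: "c' \<noteq> (\<lambda>i j. 0)" and sub: "{(x, y). Gc x y = 0} \<subseteq> zero_set c'"
  shows "3 \<le> bdeg c'"
proof (rule ccontr)
  assume "\<not> 3 \<le> bdeg c'"
  then have bd: "bdeg c' \<le> 2" by simp
  define S where "S = {(i, j). c' i j \<noteq> 0}"
  have finS: "finite S" using bp by (simp add: is_bipoly_def S_def)
  have fin2: "finite {i + j |i j. c' i j \<noteq> 0}"
  proof -
    have "{i + j |i j. c' i j \<noteq> 0} = (\<lambda>(i, j). i + j) ` S" by (auto simp: S_def)
    then show ?thesis using finS by simp
  qed
  have le: "i + j \<le> 2" if "c' i j \<noteq> 0" for i j
  proof -
    have "i + j \<le> bdeg c'" unfolding bdeg_def using fin2 that by (intro Max_ge) auto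
    then show ?thesis using bd by simp
  qed
  define T where "T = {(0::nat, 0::nat), (1, 0), (0, 1), (2, 0), (1, 1), (0, 2)}"
  have ST: "S \<subseteq> T"
  proof
    fix p assume "p \<in> S"
    then obtain i j where p: "p = (i, j)" "c' i j \<noteq> 0" by (auto simp: S_def)
    then have "i + j \<le> 2" using le by blast
    then have "i \<le> 2" "j \<le> 2 - i" by auto
    then show "p \<in> T" using p unfolding T_def by (auto simp: le_Suc_eq numeral_2_eq_2)
  qed
  have outT: "c' i j = 0" if "(i, j) \<notin> T" for i j using ST that by (auto simp: S_def)
  have ev: "bpoly_eval c' x y = c' 0 0 + c' 1 0 * x + c' 0 1 * y + c' 2 0 * x^2 + c' 1 1 * x * y + c' 0 2 * y^2" for x y
  proof -
    have "bpoly_eval c' x y = (\<Sum>(i, j)\<in>T. c' i j * x ^ i * y ^ j)"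
      unfolding bpoly_eval_def S_def[symmetric]
    proof (rule sum.mono_neutral_left)
      show "finite T" by (simp add: T_def)
      show "S \<subseteq> T" by (rule ST)
      show "\<forall>i\<in>T - S. (case i of (i, j) \<Rightarrow> c' i j * x ^ i * y ^ j) = 0" by (auto simp: S_def)
    qed
    also have "\<dots> = c' 0 0 + c' 1 0 * x + c' 0 1 * y + c' 2 0 * x^2 + c' 1 1 * x * y + c' 0 2 * y^2"
      unfolding T_def by (simp add: algebra_simps)
    finally show ?thesis .
  qed
  define a0 where "a0 = 4 * c' 0 2 - 2 * c' 1 1 + c' 2 0"
  define a1 where "a1 = - 2 * c' 0 1 - 20 * c' 0 2 + c' 1 0 + 9 * c' 1 1 - 4 * c' 2 0"
  define a2 where "a2 = c' 0 0 + 5 * c' 0 1 + 41 * c' 0 2 - 2 * c' 1 0 - 22 * c' 1 1 + 12 * c' 2 0"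
  define a3 where "a3 = - 4 * c' 0 1 - 56 * c' 0 2 + 4 * c' 1 0 + 32 * c' 1 1 - 16 * c' 2 0"
  define a4 where "a4 = 4 * c' 0 1 + 56 * c' 0 2 - 24 * c' 1 1 + 16 * c' 2 0"
  define a5 where "a5 = - 32 * c' 0 2 + 16 * c' 1 1"
  define a6 where "a6 = 16 * c' 0 2"
  define p where "p = [:0, a0, a1, a2, a3, a4, a5, a6:]"
  have "poly p k = 0" for k
  proof (cases "k = 0")
    case True then show ?thesis by (simp add: p_def)
  next
    case False
    have "(4 * k - 2 + 1 / k, 4 * k ^ 2 - 4 * k + 5 - 2 / k) \<in> zero_set c'"
      using sub curve_param[OF False] by auto
    then have E: "bpoly_eval c' (4 * k - 2 + 1 / k) (4 * k ^ 2 - 4 * k + 5 - 2 / k) = 0"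
      by (simp add: zero_set_def)
    have "poly p k = k^3 * bpoly_eval c' (4 * k - 2 + 1 / k) (4 * k ^ 2 - 4 * k + 5 - 2 / k)"
      unfolding ev p_def a0_def a1_def a2_def a3_def a4_def a5_def a6_def using False
      by (simp add: field_simps power2_eq_square power3_eq_cube; (algebra)?)
    then show ?thesis using E by simp
  qed
  then have "p = 0" using poly_all_0_iff_0 by blast
  then have "a0 = 0" "a1 = 0" "a2 = 0" "a3 = 0" "a4 = 0" "a5 = 0" "a6 = 0" by (simp_all add: p_def)
  then have z: "c' 0 2 = 0" "c' 1 1 = 0" "c' 2 0 = 0" "c' 0 1 = 0" "c' 1 0 = 0" "c' 0 0 = 0"
    unfolding a0_def a1_def a2_def a3_def a4_def a5_def a6_def by auto
  have "c' = (\<lambda>i j. 0)"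
  proof (intro ext)
    fix i j show "c' i j = 0"
    proof (cases "(i, j) \<in> T")
      case True then show ?thesis using z unfolding T_def by auto
    next
      case False then show ?thesis using outT by simp
    qed
  qed
  then show False using nz by simp
qed


lemma Gx: "deriv (\<lambda>x. Gc x y) x = - 6 * x^2 - 2 * x * y + 2 * x + 8 * y - 12"
proof -
  have "((\<lambda>x. Gc x y) has_field_derivative (- 6 * x^2 - 2 * x * y + 2 * x + 8 * y - 12)) (at x)"
    unfolding Gc_def by (auto intro!: derivative_eq_intros simp: power2_eq_square algebra_simps)
  then show ?thesis by (rule DERIV_imp_deriv)
qed

lemma Gy: "deriv (\<lambda>y. Gc x y) y = 8 * x + 8 * y - 12 - x^2"
proof -
  have "((\<lambda>y. Gc x y) has_field_derivative (8 * x + 8 * y - 12 - x^2)) (at y)"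
    unfolding Gc_def by (auto intro!: derivative_eq_intros simp: power2_eq_square algebra_simps)
  then show ?thesis by (rule DERIV_imp_deriv)
qed

lemma sing_iff: "singular_pt cc p \<longleftrightarrow> p = (-6, 12)"
proof (cases p)
  case (Pair x y)
  have sp: "singular_pt cc (x, y) \<longleftrightarrow> Gc x y = 0 \<and> - 6 * x^2 - 2 * x * y + 2 * x + 8 * y - 12 = 0 \<and> 8 * x + 8 * y - 12 - x^2 = 0"
    unfolding singular_pt_def cc_eval_fun Gx Gy by simp
  show ?thesis
  proof
    assume "singular_pt cc p"
    then have h: "Gc x y = 0" "- 6 * x^2 - 2 * x * y + 2 * x + 8 * y - 12 = 0" "8 * x + 8 * y - 12 - x^2 = 0"
      using sp Pair by auto
    have "x * (x + 6)^2 = 0" using h(2) h(3) by algebra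
    then have "x = 0 \<or> x + 6 = 0" by simp
    then have "x = 0 \<or> x = -6" by (auto simp: eq_neg_iff_add_eq_0)
    then show "p = (-6, 12)"
    proof
      assume x0: "x = 0"
      have y32: "y = 3 / 2" using h(3) x0 by (simp add: field_simps mult.commute)
      have "Gc x y = 27" unfolding x0 y32 Gc_def by (simp add: power2_eq_square power3_eq_cube)
      then show ?thesis using h(1) by simp
    next
      assume x6: "x = -6"
      then have "y = 12" using h(3) by (simp add: power2_eq_square)
      then show ?thesis using x6 Pair by simp
    qed
  next
    assume "p = (-6, 12)"
    then show "singular_pt cc p" using sp Pair by (simp add: Gc_def power2_eq_square power3_eq_cube)
  qed
qed

lemma cubic_derivs:
  fixes a0 a1 a2 a3 :: complex
  defines "phi \<equiv> (\<lambda>t. a0 + a1 * t + a2 * t^2 + a3 * t^3)"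
  shows "(deriv ^^ 2) phi 0 = 2 * a2" "(deriv ^^ 3) phi 0 = 6 * a3"
proof -
  have d1: "deriv phi = (\<lambda>t. a1 + 2 * a2 * t + 3 * a3 * t^2)"
  proof
    fix t
    have "(phi has_field_derivative (a1 + 2 * a2 * t + 3 * a3 * t^2)) (at t)"
      unfolding phi_def by (auto intro!: derivative_eq_intros simp: power2_eq_square algebra_simps)
    then show "deriv phi t = a1 + 2 * a2 * t + 3 * a3 * t^2" by (rule DERIV_imp_deriv)
  qed
  have d2: "deriv (\<lambda>t. a1 + 2 * a2 * t + 3 * a3 * t^2) = (\<lambda>t. 2 * a2 + 6 * a3 * t)"
  proof
    fix t
    have "((\<lambda>t. a1 + 2 * a2 * t + 3 * a3 * t^2) has_field_derivative (2 * a2 + 6 * a3 * t)) (at t)"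
      by (auto intro!: derivative_eq_intros simp: power2_eq_square algebra_simps)
    then show "deriv (\<lambda>t. a1 + 2 * a2 * t + 3 * a3 * t^2) t = 2 * a2 + 6 * a3 * t" by (rule DERIV_imp_deriv)
  qed
  have d3: "deriv (\<lambda>t. 2 * a2 + 6 * a3 * t) = (\<lambda>t. 6 * a3)"
  proof
    fix t
    have "((\<lambda>t. 2 * a2 + 6 * a3 * t) has_field_derivative (6 * a3)) (at t)"
      by (auto intro!: derivative_eq_intros)
    then show "deriv (\<lambda>t. 2 * a2 + 6 * a3 * t) t = 6 * a3" by (rule DERIV_imp_deriv)
  qed
  have e2: "(deriv ^^ 2) phi = deriv (deriv phi)" by (simp add: numeral_2_eq_2)
  have e3: "(deriv ^^ 3) phi = deriv (deriv (deriv phi))" by (simp add: numeral_3_eq_3)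
  show "(deriv ^^ 2) phi 0 = 2 * a2" by (simp only: e2 d1 d2) simp
  show "(deriv ^^ 3) phi 0 = 6 * a3" by (simp only: e3 d1 d2 d3)
qed

lemma dir_derivs:
  fixes v1 v2 :: complex
  shows "dir_deriv 2 cc (-6, 12) (v1, v2) = 2 * (2 * (v2 + 2 * v1) + v1)^2"
    "dir_deriv 3 cc (-6, 12) (v1, v2) = 6 * (0 - v1^2 * (v2 + 2 * v1))"
proof -
  have e: "(\<lambda>t. bpoly_eval cc (fst (-6, 12) + t * fst (v1, v2)) (snd (-6, 12) + t * snd (v1, v2)))
     = (\<lambda>t. 0 + 0 * t + (2 * (v2 + 2 * v1) + v1)^2 * t^2 + (0 - v1^2 * (v2 + 2 * v1)) * t^3)"
    unfolding cc_eval_fun by (rule ext) (simp add: Gc_def power2_eq_square power3_eq_cube; algebra)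
  show "dir_deriv 2 cc (-6, 12) (v1, v2) = 2 * (2 * (v2 + 2 * v1) + v1)^2"
    unfolding dir_deriv_def e by (rule cubic_derivs)
  show "dir_deriv 3 cc (-6, 12) (v1, v2) = 6 * (0 - v1^2 * (v2 + 2 * v1))"
    unfolding dir_deriv_def e by (rule cubic_derivs)
qed

lemma cusp: "is_cusp cc (-6, 12)"
  unfolding is_cusp_def
proof (intro conjI exI[of _ "(-2, 5)"])
  show "singular_pt cc (-6, 12)" using sing_iff by simp
  show "(-2, 5) \<noteq> ((0::complex), (0::complex))" by simp
  show "dir_deriv 2 cc (-6, 12) (-2, 5) = 0" unfolding dir_derivs by simp
  show "dir_deriv 3 cc (-6, 12) (-2, 5) \<noteq> 0" unfolding dir_derivs by simp
  show "\<forall>w. dir_deriv 2 cc (-6, 12) w = 0 \<longrightarrow> (\<exists>t. w = (t * fst (-2, 5), t * snd (-2, 5)))"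
  proof (intro allI impI)
    fix w :: "complex \<times> complex"
    obtain w1 w2 where w: "w = (w1, w2)" by (cases w)
    assume "dir_deriv 2 cc (-6, 12) w = 0"
    then have "2 * (w2 + 2 * w1) + w1 = 0" unfolding w dir_derivs by simp
    then have "w2 = - 5 / 2 * w1" by (simp add: field_simps) algebra
    then show "\<exists>t. w = (t * fst (-2, 5), t * snd (-2, 5))"
      using w by (intro exI[of _ "- w1 / 2"]) simp
  qed
qed



theorem corollary5p3:
  shows "symmetry_locus =
           (\<lambda>k::complex. (4 * k - 2 + 1 / k, 4 * k ^ 2 - 4 * k + 5 - 2 / k)) ` (UNIV - {0}) \<and>
         inj_on (\<lambda>k::complex. (4 * k - 2 + 1 / k, 4 * k ^ 2 - 4 * k + 5 - 2 / k)) (UNIV - {0}) \<and>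
         (\<exists>c. is_bipoly c \<and> bdeg c = 3 \<and> symmetry_locus = zero_set c \<and>
           (\<forall>c'. is_bipoly c' \<and> c' \<noteq> (\<lambda>i j. 0) \<and> symmetry_locus \<subseteq> zero_set c' \<longrightarrow> 3 \<le> bdeg c') \<and>
           {p. singular_pt c p} = {(-6, 12)} \<and> is_cusp c (-6, 12)) \<and>
         ([:1:], [:0, 0, 1:]) \<in> Rat 2 \<and>
         (sigma1 ([:1:], [:0, 0, 1:]), sigma2 ([:1:], [:0, 0, 1:])) = (-6, 12) \<and>
         (\<lambda>k::complex. (4 * k - 2 + 1 / k, 4 * k ^ 2 - 4 * k + 5 - 2 / k)) (-1/2) = (-6, 12)"
proof -
  have L: "symmetry_locus = (\<lambda>k::complex. (4 * k - 2 + 1 / k, 4 * k ^ 2 - 4 * k + 5 - 2 / k)) ` (UNIV - {0})"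
    using locus_sub locus_sup image_curve by blast
  have LG: "symmetry_locus = {(x, y). Gc x y = 0}" using L image_curve by simp
  have Z: "symmetry_locus = zero_set cc" using LG cc_zero_set by simp
  have ex: "\<exists>c. is_bipoly c \<and> bdeg c = 3 \<and> symmetry_locus = zero_set c \<and>
           (\<forall>c'. is_bipoly c' \<and> c' \<noteq> (\<lambda>i j. 0) \<and> symmetry_locus \<subseteq> zero_set c' \<longrightarrow> 3 \<le> bdeg c') \<and>
           {p. singular_pt c p} = {(-6, 12)} \<and> is_cusp c (-6, 12)"
  proof (intro exI[of _ cc] conjI allI impI)
    show "is_bipoly cc" by (rule cc_bipoly)
    show "bdeg cc = 3" by (rule cc_bdeg)
    show "symmetry_locus = zero_set cc" by (rule Z)
    fix c' assume "is_bipoly c' \<and> c' \<noteq> (\<lambda>i j. 0) \<and> symmetry_locus \<subseteq> zero_set c'"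
    then show "3 \<le> bdeg c'" using minimal LG by auto
  next
    show "{p. singular_pt cc p} = {(-6, 12)}" using sing_iff by auto
    show "is_cusp cc (-6, 12)" by (rule cusp)
  qed
  have cop: "coprime [:1:] [:0, 0, 1::complex:]" by (rule coprime_bez[of 1 _ 0]) simp
  have R: "([:1:], [:0, 0, 1:]) \<in> Rat 2" using cop by (simp add: Rat_def)
  have sf: "sigma1 ([:1:], [:0, 0, 1:]) = N1c 1 0 0 0 0 1 / Dc 1 0 0 0 0 1"
     "sigma2 ([:1:], [:0, 0, 1:]) = N2c 1 0 0 0 0 1 / Dc 1 0 0 0 0 1"
    using sigma_formula[OF R] by (simp_all add: numeral_2_eq_2)
  have s: "(sigma1 ([:1:], [:0, 0, 1:]), sigma2 ([:1:], [:0, 0, 1:])) = (-6, 12)"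
    unfolding sf by (simp add: N1c_def N2c_def Dc_def)
  have p: "(\<lambda>k::complex. (4 * k - 2 + 1 / k, 4 * k ^ 2 - 4 * k + 5 - 2 / k)) (-1/2) = (-6, 12)"
    by (simp add: power2_eq_square)
  show ?thesis using L param_inj ex R s p by blast
qed

end
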